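(* For every positive integer $n$ and every partition $\alpha\in\mathcal{P}(n)$ there exist unique integers $q>0$ and $s_1,\dots,s_q\ge0$ such that \[\delta(\alpha)=\big(1,2,\dots,q-1,q,q^{(s_q)},(q-1)^{(s_{q-1})},\dots,1^{(s_1)}\big),\] and these satisfy $\frac{q(q+1)}{2}+\sum_{k=1}^q k\,s_k=n$.
   Context: A partition of a positive integer $n$ is a finite non-increasing sequence $\alpha=(\alpha_1,\dots,\alpha_l)$ of positive integers with sum $n$; $\mathcal{P}(n)$ is the set of partitions of $n$, and $\alpha_i=0$ for $i>l$. The diagonal sequence is $\delta(\alpha)=(d_k)_{k\ge1}$ with $d_k=|\{i:1\le i\le k,\ \alpha_i+i-1\ge k\}|$, trailing zeros omitted. The notation $j^{(s)}$ denotes $s$ consecutive entries equal to $j$. *)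

theory Defs
  imports Main
begin

definition is_partition :: "nat \<Rightarrow> nat list \<Rightarrow> bool" where
  "is_partition n \<alpha> \<longleftrightarrow> sorted_wrt (\<ge>) \<alpha> \<and> (\<forall>x\<in>set \<alpha>. 0 < x) \<and> sum_list \<alpha> = n"

text \<open>1-indexed parts, with alpha_i = 0 for i > length.\<close>
definition part :: "nat list \<Rightarrow> nat \<Rightarrow> nat" where
  "part \<alpha> i = (if 1 \<le> i \<and> i \<le> length \<alpha> then \<alpha> ! (i - 1) else 0)"

definition diag_entry :: "nat list \<Rightarrow> nat \<Rightarrow> nat" where
  "diag_entry \<alpha> k = card {i. 1 \<le> i \<and> i \<le> k \<and> part \<alpha> i + i - 1 \<ge> k}"

definition diag_len :: "nat list \<Rightarrow> nat" where
  "diag_len \<alpha> = (LEAST K. \<forall>k>K. diag_entry \<alpha> k = 0)"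

definition diag_seq :: "nat list \<Rightarrow> nat list" where
  "diag_seq \<alpha> = map (diag_entry \<alpha>) [1..<diag_len \<alpha> + 1]"

text \<open>The sequence (1,2,...,q, q^(s_q), ..., 1^(s_1)), with s_k = ss ! (k-1).\<close>
definition stair_seq :: "nat \<Rightarrow> nat list \<Rightarrow> nat list" where
  "stair_seq q ss = [1..<q + 1] @ concat (map (\<lambda>k. replicate (ss ! (k - 1)) k) (rev [1..<q + 1]))"

end

theory Submission
  imports Defs
begin


fun T :: "(nat \<Rightarrow> nat) \<Rightarrow> nat \<Rightarrow> nat list" where
  "T f 0 = []"
| "T f (Suc q) = replicate (f (Suc q)) (Suc q) @ T f q"

lemma concat_T: "concat (map (\<lambda>k. replicate (ss ! (k - 1)) k) (rev [1..<q + 1])) = T (\<lambda>k. ss ! (k - 1)) q"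
  by (induction q) auto

lemma stair_T: "stair_seq q ss = [1..<q + 1] @ T (\<lambda>k. ss ! (k - 1)) q"
  unfolding stair_seq_def concat_T ..

lemma T_set: "set (T f q) \<subseteq> {1..q}"
  by (induction q) auto

lemma count_rep: "count_list (replicate m x) k = (if x = k then m else 0)"
  by (induction m) auto

lemma T_count: "count_list (T f q) k = (if 1 \<le> k \<and> k \<le> q then f k else 0)"
  by (induction q) (auto simp: count_rep)

lemma T_sum: "sum_list (T f q) = (\<Sum>k=1..q. k * f k)"
  by (induction q) (auto simp: sum_list_replicate)

lemma T_cong: "(\<And>k. 1 \<le> k \<Longrightarrow> k \<le> q \<Longrightarrow> f k = g k) \<Longrightarrow> T f q = T g q"
  by (induction q) auto

lemma T_zero: "T (\<lambda>_. 0) q = []"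
  by (induction q) auto

lemma T_cons: "1 \<le> x \<Longrightarrow> x \<le> q \<Longrightarrow> (\<And>k. x < k \<Longrightarrow> k \<le> q \<Longrightarrow> f k = 0)
   \<Longrightarrow> T (f(x := Suc (f x))) q = x # T f q"
proof (induction q)
  case 0
  then show ?case by simp
next
  case (Suc q)
  show ?case
  proof (cases "x = Suc q")
    case True
    have "T (f(x := Suc (f x))) q = T f q" by (rule T_cong) (use True in auto)
    then show ?thesis using True by (simp add: fun_upd_def)
  next
    case False
    then have "x \<le> q" using Suc.prems by simp
    then have "T (f(x := Suc (f x))) q = x # T f q" by (intro Suc.IH) (use Suc.prems in auto)
    moreover have "f (Suc q) = 0" using Suc.prems False by auto
    ultimately show ?thesis using False by (simp add: fun_upd_def)
  qed
qed

lemma T_sorted: "sorted_wrt (\<ge>) r \<Longrightarrow> set r \<subseteq> {1..q} \<Longrightarrow> T (count_list r) q = r"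
proof (induction r)
  case Nil
  have "count_list ([]::nat list) = (\<lambda>_. 0)" by auto
  then show ?case using T_zero by simp
next
  case (Cons x r)
  have e: "count_list (x # r) = (count_list r)(x := Suc (count_list r x))" by (auto simp: fun_eq_iff)
  have z: "count_list r k = 0" if "x < k" for k
    using Cons.prems that by (auto simp: count_list_0_iff)
  have "T (count_list (x # r)) q = x # T (count_list r) q"
    unfolding e by (rule T_cons) (use Cons.prems z in auto)
  moreover have "T (count_list r) q = r" using Cons by auto
  ultimately show ?case by (simp only:)
qed

lemma gauss_upt0: "sum_list [1..<q+1] = \<Sum>{0..q}"
  by (induction q) auto

lemma gauss_upt: "sum_list [1..<q+1] = q * (q + 1) div 2"
  unfolding gauss_upt0 gauss_sum_nat by simp

lemma stair_sum: "sum_list (stair_seq q ss) = q * (q + 1) div 2 + (\<Sum>k=1..q. k * ss ! (k - 1))"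
  by (simp only: stair_T sum_list_append gauss_upt T_sum)

lemma stair_set: "set (stair_seq q ss) = {1..q}"
  unfolding stair_T using T_set by auto

lemma stair_unique:
  assumes "length ss = q" "length ss' = q'" "0 < q" "0 < q'" "stair_seq q ss = stair_seq q' ss'"
  shows "q = q' \<and> ss = ss'"
proof -
  have "{1..q} = {1..q'}" using assms(5) stair_set by metis
  then have qq: "q = q'" using assms(3,4)
    by (metis atLeastAtMost_iff atLeastatMost_empty_iff2 le_antisym linorder_le_cases order_refl zero_less_iff_neq_zero less_one not_le)
  have "T (\<lambda>k. ss ! (k - 1)) q = T (\<lambda>k. ss' ! (k - 1)) q"
    using assms(5) unfolding stair_T qq by simp
  then have c: "ss ! (k - 1) = ss' ! (k - 1)" if "1 \<le> k" "k \<le> q" for k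
    using T_count[of "\<lambda>k. ss ! (k - 1)" q k] T_count[of "\<lambda>k. ss' ! (k - 1)" q k] that by metis
  have "ss = ss'"
    by (rule nth_equalityI) (use assms(1,2) qq c[of "Suc _"] in auto)
  then show ?thesis using qq by simp
qed



lemma stair_exists:
  fixes d :: "nat \<Rightarrow> nat" and K :: nat
  assumes K1: "1 \<le> K" and d1: "d 1 = 1"
    and le: "\<And>k. 1 \<le> k \<Longrightarrow> k < K \<Longrightarrow> d (Suc k) \<le> Suc (d k)"
    and eq: "\<And>k. 1 \<le> k \<Longrightarrow> k < K \<Longrightarrow> d (Suc k) = Suc (d k) \<Longrightarrow> d k = k"
    and pos: "\<And>k. 1 \<le> k \<Longrightarrow> k \<le> K \<Longrightarrow> 0 < d k"
  shows "\<exists>q ss. 0 < q \<and> length ss = q \<and> map d [1..<K+1] = stair_seq q ss"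
proof -
  define P where "P m \<longleftrightarrow> m = K \<or> d (Suc m) \<noteq> Suc m" for m
  define q where "q = (LEAST m. P m)"
  have Pq: "P q" unfolding q_def by (rule LeastI[of P K]) (simp add: P_def)
  have qK: "q \<le> K" unfolding q_def by (rule Least_le) (simp add: P_def)
  have q1: "1 \<le> q"
  proof (rule ccontr)
    assume "\<not> 1 \<le> q"
    then have "q = 0" by simp
    then show False using Pq K1 d1 by (simp add: P_def)
  qed
  have low: "d k = k" if "1 \<le> k" "k \<le> q" for k
  proof -
    have "k - 1 < q" using that by simp
    then have "\<not> P (k - 1)" unfolding q_def by (rule not_less_Least)
    then show ?thesis using that by (simp add: P_def)
  qed
  have hi: "d k \<le> q" if "q < k" "k \<le> K" for k
    using that
  proof (induction k rule: nat_induct)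
    case 0 then show ?case by simp
  next
    case (Suc k)
    show ?case
    proof (cases "k = q")
      case True
      then have "d (Suc q) \<noteq> Suc q" using Pq Suc.prems by (auto simp: P_def)
      moreover have "d (Suc q) \<le> Suc (d q)" using le[of q] q1 Suc.prems True by simp
      ultimately show ?thesis using low[of q] q1 True by simp
    next
      case False
      then have kq: "q < k" using Suc.prems by simp
      have dk: "d k \<le> q" using Suc kq by simp
      have "d (Suc k) \<le> Suc (d k)" using le[of k] q1 kq Suc.prems by simp
      moreover have "d (Suc k) \<noteq> Suc (d k)" using eq[of k] q1 kq Suc.prems dk by auto
      ultimately show ?thesis using dk by simp
    qed
  qed
  have dec: "d (Suc k) \<le> d k" if "q < k" "k < K" for k
  proof -
    have dk: "d k \<le> q" using hi that by simp
    have "d (Suc k) \<le> Suc (d k)" using le[of k] q1 that by simp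
    moreover have "d (Suc k) \<noteq> Suc (d k)" using eq[of k] q1 that dk by auto
    ultimately show ?thesis by simp
  qed
  have mono: "d j \<le> d i" if "q < i" "i \<le> j" "j \<le> K" for i j
    using that(2,3)
  proof (induction j rule: dec_induct)
    case base then show ?case by simp
  next
    case (step j)
    then show ?case using dec[of j] that(1) by simp
  qed
  define r where "r = map d [Suc q..<K+1]"
  have "[1..<K+1] = [1..<q+1] @ [Suc q..<K+1]"
    using upt_add_eq_append[of 1 "q+1" "K - q"] qK q1 by simp
  moreover have "map d [1..<q+1] = [1..<q+1]"
    by (rule map_idI) (use low in auto)
  ultimately have split: "map d [1..<K+1] = [1..<q+1] @ r" unfolding r_def by simp
  have sorted: "sorted_wrt (\<ge>) r"
    unfolding r_def sorted_wrt_iff_nth_less using mono by (auto simp del: upt_Suc)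
  have rset: "set r \<subseteq> {1..q}"
    unfolding r_def using hi pos by (auto simp: Suc_le_eq)
  define ss where "ss = map (count_list r) [1..<q+1]"
  have "T (\<lambda>k. ss ! (k - 1)) q = T (count_list r) q"
    by (rule T_cong) (auto simp del: upt_Suc simp: ss_def nth_map)
  also have "\<dots> = r" using T_sorted sorted rset by blast
  finally have "stair_seq q ss = map d [1..<K+1]" unfolding stair_T split by simp
  moreover have "length ss = q" by (simp add: ss_def)
  ultimately show ?thesis using q1 by (intro exI[of _ q] exI[of _ ss]) auto
qed



definition Aset :: "nat list \<Rightarrow> nat \<Rightarrow> nat set" where
  "Aset \<alpha> k = {i. 1 \<le> i \<and> i \<le> k \<and> part \<alpha> i + i - 1 \<ge> k}"

lemma diag_entry_Aset: "diag_entry \<alpha> k = card (Aset \<alpha> k)"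
  by (simp add: diag_entry_def Aset_def)

lemma Aset_sub: "Aset \<alpha> k \<subseteq> {1..k}" by (auto simp: Aset_def)

lemma finite_Aset: "finite (Aset \<alpha> k)"
  by (rule finite_subset[OF Aset_sub]) simp

lemma part_pos: assumes "is_partition n \<alpha>" "1 \<le> i" "i \<le> length \<alpha>" shows "0 < part \<alpha> i"
  using assms nth_mem[of "i - 1" \<alpha>] by (auto simp: is_partition_def part_def)

lemma part_le: assumes "is_partition n \<alpha>" shows "part \<alpha> i \<le> n"
proof (cases "1 \<le> i \<and> i \<le> length \<alpha>")
  case True
  then have "\<alpha> ! (i - 1) \<in> set \<alpha>" by (intro nth_mem) linarith
  then have "\<alpha> ! (i - 1) \<le> sum_list \<alpha>" by (rule member_le_sum_list) simp_all
  then show ?thesis using True assms by (simp add: part_def is_partition_def)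
qed (auto simp add: part_def)

lemma part_anti: assumes "is_partition n \<alpha>" "1 \<le> i" "i \<le> j" shows "part \<alpha> j \<le> part \<alpha> i"
proof (cases "j \<le> length \<alpha> \<and> i < j")
  case True
  then have "\<alpha> ! (j - 1) \<le> \<alpha> ! (i - 1)"
    using sorted_wrt_nth_less[of "(\<ge>)" \<alpha> "i - 1" "j - 1"] assms by (auto simp: is_partition_def)
  then show ?thesis using True assms by (simp add: part_def)
next
  case False
  then show ?thesis using assms by (auto simp: part_def)
qed

lemma S1: "i \<in> Aset \<alpha> (Suc k) \<Longrightarrow> i \<le> k \<Longrightarrow> i \<in> Aset \<alpha> k"
  by (auto simp: Aset_def)

lemma S2: assumes "is_partition n \<alpha>" "i \<in> Aset \<alpha> (Suc k)" "2 \<le> i" shows "i - 1 \<in> Aset \<alpha> k"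
proof -
  have "part \<alpha> i \<le> part \<alpha> (i - 1)" using part_anti[OF assms(1), of "i - 1" i] assms(3) by simp
  then show ?thesis using assms(2,3) by (auto simp: Aset_def)
qed

lemma sub_ins: "Aset \<alpha> (Suc k) \<subseteq> insert (Suc k) (Aset \<alpha> k)"
  using S1 by (auto simp: Aset_def)

lemma step_le: "diag_entry \<alpha> (Suc k) \<le> Suc (diag_entry \<alpha> k)"
proof -
  have "card (Aset \<alpha> (Suc k)) \<le> card (insert (Suc k) (Aset \<alpha> k))"
    by (rule card_mono) (use sub_ins finite_Aset in auto)
  also have "\<dots> \<le> Suc (card (Aset \<alpha> k))" by (simp add: card_insert_if finite_Aset)
  finally show ?thesis by (simp add: diag_entry_Aset)
qed

lemma step_eq:
  assumes P: "is_partition n \<alpha>" and k1: "1 \<le> k" and e: "diag_entry \<alpha> (Suc k) = Suc (diag_entry \<alpha> k)"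
  shows "diag_entry \<alpha> k = k"
proof -
  let ?A = "Aset \<alpha> k" and ?B = "Aset \<alpha> (Suc k)"
  have kn: "Suc k \<notin> ?A" by (auto simp: Aset_def)
  have cB: "card ?B = card (insert (Suc k) ?A)" using e kn finite_Aset by (simp add: diag_entry_Aset)
  have B: "?B = insert (Suc k) ?A"
    using card_subset_eq[OF _ sub_ins cB] finite_Aset by blast
  have img: "(\<lambda>i. i - 1) ` (?B - {1}) \<subseteq> ?A"
  proof
    fix x assume "x \<in> (\<lambda>i. i - 1) ` (?B - {1})"
    then obtain i where i: "i \<in> ?B" "i \<noteq> 1" "x = i - 1" by auto
    then have "2 \<le> i" by (auto simp: Aset_def)
    then show "x \<in> ?A" using S2[OF P i(1)] i by simp
  qed
  have inj: "inj_on (\<lambda>i. i - 1) (?B - {1})"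
    by (auto simp: inj_on_def Aset_def)
  have cimg: "card ((\<lambda>i. i - 1) ` (?B - {1})) = card (?B - {1})"
    using card_image[OF inj] .
  have one: "1 \<in> ?B"
  proof (rule ccontr)
    assume "1 \<notin> ?B"
    then have "?B - {1} = ?B" by simp
    then have "card ?B \<le> card ?A" using cimg card_mono[OF finite_Aset img] by simp
    then show False using e by (simp add: diag_entry_Aset)
  qed
  have "card (?B - {1}) = card ?A" using one e by (simp add: diag_entry_Aset finite_Aset)
  then have imgeq: "(\<lambda>i. i - 1) ` (?B - {1}) = ?A"
    using card_subset_eq[OF finite_Aset img] cimg by simp
  have all: "j \<in> ?A" if "1 \<le> j" "j \<le> k" for j
    using that
  proof (induction j)
    case 0 then show ?case by simp
  next
    case (Suc j)
    show ?case
    proof (cases "j = 0")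
      case True
      then show ?thesis using one B k1 by auto
    next
      case False
      then have "j \<in> ?A" using Suc by simp
      then obtain i where i: "i \<in> ?B" "i \<noteq> 1" "j = i - 1" using imgeq by blast
      then have "i = Suc j" using False by simp
      then show ?thesis using i B Suc.prems by auto
    qed
  qed
  have "?A = {1..k}" using all Aset_sub by auto
  then show ?thesis by (simp add: diag_entry_Aset)
qed

lemma zero_prop:
  assumes P: "is_partition n \<alpha>" and k1: "1 \<le> k" and z: "diag_entry \<alpha> k = 0"
  shows "diag_entry \<alpha> (Suc k) = 0"
proof -
  have A: "Aset \<alpha> k = {}" using z finite_Aset by (simp add: diag_entry_Aset)
  have "Aset \<alpha> (Suc k) = {}"
  proof (rule ccontr)
    assume "Aset \<alpha> (Suc k) \<noteq> {}"
    then obtain i where i: "i \<in> Aset \<alpha> (Suc k)" by blast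
    show False
    proof (cases "i \<le> k")
      case True then show False using S1[OF i] A by simp
    next
      case False
      then have "2 \<le> i" using k1 by simp
      then show False using S2[OF P i] A by simp
    qed
  qed
  then show ?thesis by (simp add: diag_entry_Aset)
qed

lemma d1: assumes "is_partition n \<alpha>" "0 < n" shows "diag_entry \<alpha> 1 = 1"
proof -
  have "\<alpha> \<noteq> []" using assms by (auto simp: is_partition_def)
  then have "0 < part \<alpha> 1" using part_pos[OF assms(1), of 1] by (simp add: Suc_le_eq)
  then have "Aset \<alpha> 1 = {1}" by (auto simp: Aset_def)
  then show ?thesis by (simp add: diag_entry_Aset)
qed

lemma big_zero: assumes "is_partition n \<alpha>" "n + length \<alpha> \<le> k" shows "diag_entry \<alpha> k = 0"
proof -
  have "Aset \<alpha> k = {}"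
  proof (rule ccontr)
    assume "Aset \<alpha> k \<noteq> {}"
    then obtain i where i: "1 \<le> i" "i \<le> k" "part \<alpha> i + i - 1 \<ge> k" by (auto simp: Aset_def)
    have "i \<le> length \<alpha>"
    proof (rule ccontr)
      assume "\<not> i \<le> length \<alpha>"
      then have "part \<alpha> i = 0" by (simp add: part_def)
      then show False using i by simp
    qed
    then show False using i part_le[OF assms(1), of i] assms(2) by simp
  qed
  then show ?thesis by (simp add: diag_entry_Aset)
qed

lemma shift1: "(\<Sum>i=1..N. f i) = (\<Sum>i<N. (f::nat\<Rightarrow>nat) (Suc i))"
  by (induction N) auto

lemma total_sum:
  assumes P: "is_partition n \<alpha>" and N: "N = n + length \<alpha>"
  shows "(\<Sum>k=1..N. diag_entry \<alpha> k) = n"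
proof -
  let ?S1 = "SIGMA k:{1..N}. Aset \<alpha> k"
  let ?S2 = "SIGMA i:{1..N}. {i..part \<alpha> i + i - 1}"
  have bnd: "part \<alpha> i + i - 1 \<le> N" if "1 \<le> i" "0 < part \<alpha> i" for i
  proof -
    have "i \<le> length \<alpha>" using that by (auto simp: part_def split: if_splits)
    then show ?thesis using part_le[OF P, of i] N by simp
  qed
  have "prod.swap ` ?S1 = ?S2"
  proof
    show "prod.swap ` ?S1 \<subseteq> ?S2" by (auto simp: Aset_def)
    show "?S2 \<subseteq> prod.swap ` ?S1"
    proof
      fix x assume x: "x \<in> ?S2"
      then obtain i k where ik: "x = (i, k)" "1 \<le> i" "i \<le> N" "i \<le> k" "k \<le> part \<alpha> i + i - 1" by auto
      then have "0 < part \<alpha> i" by simp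
      then have "k \<le> N" using bnd ik by force
      then have "(k, i) \<in> ?S1" using ik by (auto simp: Aset_def)
      then show "x \<in> prod.swap ` ?S1" using ik by force
    qed
  qed
  then have "card ?S1 = card ?S2" using card_image[of prod.swap ?S1] by (simp add: inj_on_def)
  moreover have "card ?S1 = (\<Sum>k=1..N. diag_entry \<alpha> k)"
    by (simp add: card_SigmaI finite_Aset diag_entry_Aset)
  moreover have "card ?S2 = (\<Sum>i=1..N. part \<alpha> i)"
    by (simp add: card_SigmaI)
  moreover have "(\<Sum>i=1..N. part \<alpha> i) = n"
  proof -
    have "(\<Sum>i=1..N. part \<alpha> i) = (\<Sum>i<N. part \<alpha> (Suc i))"
      by (rule shift1)
    also have "\<dots> = (\<Sum>i<length \<alpha>. \<alpha> ! i)"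
      by (rule sum.mono_neutral_cong_right) (auto simp: N part_def)
    also have "\<dots> = n" using P by (simp add: is_partition_def sum_list_sum_nth atLeast0LessThan)
    finally show ?thesis .
  qed
  ultimately show ?thesis by simp
qed



lemma K_props:
  assumes P: "is_partition n \<alpha>" and n0: "0 < n"
  shows "(\<forall>k>diag_len \<alpha>. diag_entry \<alpha> k = 0) \<and> 1 \<le> diag_len \<alpha> \<and> diag_len \<alpha> \<le> n + length \<alpha>
     \<and> (\<forall>k. 1 \<le> k \<and> k \<le> diag_len \<alpha> \<longrightarrow> 0 < diag_entry \<alpha> k)"
proof -
  let ?Q = "\<lambda>K. \<forall>k>K. diag_entry \<alpha> k = 0"
  let ?K = "diag_len \<alpha>"
  have ex: "?Q (n + length \<alpha>)" using big_zero[OF P] by simp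
  have Q: "?Q ?K" unfolding diag_len_def by (rule LeastI[of ?Q, OF ex])
  have Kb: "?K \<le> n + length \<alpha>" unfolding diag_len_def by (rule Least_le[of ?Q, OF ex])
  have K1: "1 \<le> ?K"
  proof (rule ccontr)
    assume "\<not> 1 \<le> ?K"
    then have "diag_entry \<alpha> 1 = 0" using Q by simp
    then show False using d1[OF P n0] by simp
  qed
  have dK: "diag_entry \<alpha> ?K \<noteq> 0"
  proof
    assume z: "diag_entry \<alpha> ?K = 0"
    have "?Q (?K - 1)"
    proof (intro allI impI)
      fix k assume "?K - 1 < k"
      then have "k = ?K \<or> ?K < k" by auto
      then show "diag_entry \<alpha> k = 0" using z Q by auto
    qed
    then have "?K \<le> ?K - 1" unfolding diag_len_def by (rule Least_le)
    then show False using K1 by simp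
  qed
  have pos: "0 < diag_entry \<alpha> k" if "1 \<le> k" "k \<le> ?K" for k
  proof (rule ccontr)
    assume "\<not> 0 < diag_entry \<alpha> k"
    then have z: "diag_entry \<alpha> k = 0" by simp
    have "diag_entry \<alpha> j = 0" if "k \<le> j" for j
      using that
    proof (induction j rule: dec_induct)
      case base then show ?case using z .
    next
      case (step j) then show ?case using zero_prop[OF P, of j] \<open>1 \<le> k\<close> by simp
    qed
    then have "diag_entry \<alpha> ?K = 0" using that(2) by simp
    then show False using dK by simp
  qed
  show ?thesis
  proof (intro conjI allI impI)
    fix k assume "1 \<le> k \<and> k \<le> ?K"
    then show "0 < diag_entry \<alpha> k" using pos by simp
  qed (use Q K1 Kb in simp_all)
qed

theorem corollary2p2:
  fixes n :: nat and \<alpha> :: "nat list"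
  assumes "0 < n" and "is_partition n \<alpha>"
  shows "(\<exists>!(q, ss). 0 < q \<and> length ss = q \<and> diag_seq \<alpha> = stair_seq q ss)
       \<and> (\<forall>q ss. 0 < q \<and> length ss = q \<and> diag_seq \<alpha> = stair_seq q ss \<longrightarrow>
            q * (q + 1) div 2 + (\<Sum>k=1..q. k * ss ! (k - 1)) = n)"
proof -
  note P = assms(2) and n0 = assms(1)
  let ?K = "diag_len \<alpha>" and ?d = "diag_entry \<alpha>"
  have KP: "(\<forall>k>?K. ?d k = 0)" "1 \<le> ?K" "?K \<le> n + length \<alpha>" "\<And>k. 1 \<le> k \<Longrightarrow> k \<le> ?K \<Longrightarrow> 0 < ?d k"
    using K_props[OF P n0] by blast+
  have ex: "\<exists>q ss. 0 < q \<and> length ss = q \<and> map ?d [1..<?K+1] = stair_seq q ss"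
    apply (rule stair_exists)
    using KP(2) apply simp
    using d1[OF P n0] apply simp
    using step_le apply blast
    using step_eq[OF P] apply blast
    using KP(4) apply blast
    done
  have E: "\<exists>!(q, ss). 0 < q \<and> length ss = q \<and> diag_seq \<alpha> = stair_seq q ss"
  proof (rule ex_ex1I)
    show "\<exists>x. case x of (q, ss) \<Rightarrow> 0 < q \<and> length ss = q \<and> diag_seq \<alpha> = stair_seq q ss"
      using ex unfolding diag_seq_def by auto
  next
    fix x y
    assume "case x of (q, ss) \<Rightarrow> 0 < q \<and> length ss = q \<and> diag_seq \<alpha> = stair_seq q ss"
      and "case y of (q, ss) \<Rightarrow> 0 < q \<and> length ss = q \<and> diag_seq \<alpha> = stair_seq q ss"
    moreover obtain q ss where x: "x = (q, ss)" by (cases x)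
    moreover obtain q' ss' where y: "y = (q', ss')" by (cases y)
    ultimately have "0 < q" "length ss = q" "diag_seq \<alpha> = stair_seq q ss"
      "0 < q'" "length ss' = q'" "diag_seq \<alpha> = stair_seq q' ss'" by simp_all
    then have "q = q' \<and> ss = ss'" using stair_unique[of ss q ss' q'] by simp
    then show "x = y" using x y by simp
  qed
  have sumD: "sum_list (diag_seq \<alpha>) = n"
  proof -
    have "sum_list (diag_seq \<alpha>) = sum ?d {1..?K}"
    proof -
      have e: "{1..<?K+1} = {1..?K}" by auto
      show ?thesis unfolding diag_seq_def sum_set_upt_conv_sum_list_nat[symmetric] set_upt e ..
    qed
    also have "\<dots> = sum ?d {1..n + length \<alpha>}"
    proof (rule sum.mono_neutral_left)
      show "finite {1..n + length \<alpha>}" by simp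
      show "{1..?K} \<subseteq> {1..n + length \<alpha>}" using KP(3) by auto
      show "\<forall>i\<in>{1..n + length \<alpha>} - {1..?K}. ?d i = 0" using KP(1) by auto
    qed
    also have "\<dots> = n" using total_sum[OF P] by simp
    finally show ?thesis .
  qed
  show ?thesis
  proof (intro conjI E allI impI)
    fix q ss assume "0 < q \<and> length ss = q \<and> diag_seq \<alpha> = stair_seq q ss"
    then show "q * (q + 1) div 2 + (\<Sum>k=1..q. k * ss ! (k - 1)) = n"
      using sumD stair_sum[of q ss] by simp
  qed
qed

end
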